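(* Let $G$ be an optimal digraph. Then $\alpha_G$ is finite, and for every vertex $v$ of $G$, $\alpha_G - 1 \leq \delta^+(v) \leq \beta_G$ and $\alpha_G - 1 \leq \delta^-(v) \leq \beta_G$.
   Context: Digraphs are finite, loopless, with at most one edge $uv$ per ordered pair. $\delta^+(v)=|\{u: vu\in E(G)\}|$, $\delta^-(v)=|\{u:uv\in E(G)\}|$. A digraph is $2$-free if no distinct $u,v$ have both $uv,vu$ as edges. A circular interval digraph is a digraph together with a fixed arrangement of its vertices in a circle such that for all distinct $u,v,w$ in clockwise order with $uw\in E(G)$, also $uv,vw\in E(G)$. For distinct $u,v$, $d(u,v) = 1 + |\{w: u,w,v \text{ distinct, in clockwise order}\}|$; this is the length of the ordered pair $uv$. A non-edge is an ordered pair $(u,v)$ of distinct vertices with neither $uv$ nor $vu$ an edge; its length is $d(u,v)$. $\alpha_G$ is the minimum length of a non-edge ($\infty$ if none) and $\beta_G$ the maximum length of an edge ($0$ if none). $\xi(G)$ is the number of pairs $(uv,(w,x))$ with $uv\in E(G)$, $(w,x)$ a non-edge, $d(u,v)>d(w,x)$. $\tilde P_3(G)$ is the number of triples $(a,b,c)$ of distinct vertices with $ab,bc\in E(G)$ and $ac,ca\notin E(G)$. For fixed $n\ge 4$, $G$ is optimal if it is a $2$-free circular interval digraph on $n$ vertices maximizing $\tilde P_3$ among all such digraphs and, subject to this, minimizing $\xi(G)$. *)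

theory Defs
  imports Main "HOL-Library.Extended_Nat"
begin

text \<open>Vertices are 0,...,n-1, listed in clockwise order around the circle.
  A digraph is given by its edge relation E on these vertices.\<close>

definition dlen :: "nat \<Rightarrow> nat \<Rightarrow> nat \<Rightarrow> nat" where
  "dlen n u v = nat ((int v - int u) mod int n)"

definition is_digraph :: "nat \<Rightarrow> (nat \<Rightarrow> nat \<Rightarrow> bool) \<Rightarrow> bool" where
  "is_digraph n E \<longleftrightarrow> (\<forall>u v. E u v \<longrightarrow> u < n \<and> v < n \<and> u \<noteq> v)"

definition two_free :: "nat \<Rightarrow> (nat \<Rightarrow> nat \<Rightarrow> bool) \<Rightarrow> bool" where
  "two_free n E \<longleftrightarrow> (\<forall>u v. E u v \<longrightarrow> \<not> E v u)"

text \<open>u, v, w distinct and in clockwise order iff d(u,v) < d(u,w).\<close>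
definition circ_interval :: "nat \<Rightarrow> (nat \<Rightarrow> nat \<Rightarrow> bool) \<Rightarrow> bool" where
  "circ_interval n E \<longleftrightarrow> is_digraph n E \<and>
     (\<forall>u<n. \<forall>v<n. \<forall>w<n. u \<noteq> v \<and> v \<noteq> w \<and> u \<noteq> w \<and> dlen n u v < dlen n u w \<and> E u w
        \<longrightarrow> E u v \<and> E v w)"

definition nonedge :: "nat \<Rightarrow> (nat \<Rightarrow> nat \<Rightarrow> bool) \<Rightarrow> nat \<Rightarrow> nat \<Rightarrow> bool" where
  "nonedge n E u v \<longleftrightarrow> u < n \<and> v < n \<and> u \<noteq> v \<and> \<not> E u v \<and> \<not> E v u"

definition alpha :: "nat \<Rightarrow> (nat \<Rightarrow> nat \<Rightarrow> bool) \<Rightarrow> enat" where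
  "alpha n E = (if \<exists>u v. nonedge n E u v
      then enat (Min {dlen n u v | u v. nonedge n E u v}) else \<infinity>)"

definition beta :: "nat \<Rightarrow> (nat \<Rightarrow> nat \<Rightarrow> bool) \<Rightarrow> nat" where
  "beta n E = (if \<exists>u v. E u v then Max {dlen n u v | u v. E u v} else 0)"

definition outdeg :: "nat \<Rightarrow> (nat \<Rightarrow> nat \<Rightarrow> bool) \<Rightarrow> nat \<Rightarrow> nat" where
  "outdeg n E v = card {u. u < n \<and> E v u}"

definition indeg :: "nat \<Rightarrow> (nat \<Rightarrow> nat \<Rightarrow> bool) \<Rightarrow> nat \<Rightarrow> nat" where
  "indeg n E v = card {u. u < n \<and> E u v}"

definition xi :: "nat \<Rightarrow> (nat \<Rightarrow> nat \<Rightarrow> bool) \<Rightarrow> nat" where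
  "xi n E = card {((u,v),(w,x)). u < n \<and> v < n \<and> w < n \<and> x < n \<and>
      E u v \<and> nonedge n E w x \<and> dlen n u v > dlen n w x}"

definition P3 :: "nat \<Rightarrow> (nat \<Rightarrow> nat \<Rightarrow> bool) \<Rightarrow> nat" where
  "P3 n E = card {(a,b,c). a < n \<and> b < n \<and> c < n \<and> a \<noteq> b \<and> b \<noteq> c \<and> a \<noteq> c \<and>
      E a b \<and> E b c \<and> \<not> E a c \<and> \<not> E c a}"

definition admissible :: "nat \<Rightarrow> (nat \<Rightarrow> nat \<Rightarrow> bool) \<Rightarrow> bool" where
  "admissible n E \<longleftrightarrow> is_digraph n E \<and> two_free n E \<and> circ_interval n E"

definition optimal :: "nat \<Rightarrow> (nat \<Rightarrow> nat \<Rightarrow> bool) \<Rightarrow> bool" where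
  "optimal n E \<longleftrightarrow> admissible n E \<and>
     (\<forall>E'. admissible n E' \<longrightarrow> P3 n E' \<le> P3 n E) \<and>
     (\<forall>E'. admissible n E' \<and> P3 n E' = P3 n E \<longrightarrow> xi n E \<le> xi n E')"

end

theory Submission
  imports Defs
begin

lemma dlen_alt: "u < n \<Longrightarrow> v < n \<Longrightarrow> dlen n u v = (if u \<le> v then v - u else n + v - u)"
proof (cases "u \<le> v")
  case True
  assume "u < n" "v < n"
  then have "(int v - int u) mod int n = int v - int u" using True by (intro mod_pos_pos_trivial) auto
  then show ?thesis using True unfolding dlen_def by auto
next
  case False
  assume "u < n" "v < n"
  have "(int v - int u) mod int n = (int v - int u + int n) mod int n" by simp
  also have "\<dots> = int v - int u + int n" using False \<open>u<n\<close> \<open>v<n\<close> by (intro mod_pos_pos_trivial) auto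
  finally show ?thesis using False unfolding dlen_def by auto
qed

lemma dlen_lt: "u < n \<Longrightarrow> v < n \<Longrightarrow> dlen n u v < n"
  by (simp add: dlen_alt split: if_splits; arith?)

lemma dlen_pos: "u < n \<Longrightarrow> v < n \<Longrightarrow> u \<noteq> v \<Longrightarrow> dlen n u v \<ge> 1"
  by (simp add: dlen_alt split: if_splits; arith?)

lemma dlen_rev: "u < n \<Longrightarrow> v < n \<Longrightarrow> u \<noteq> v \<Longrightarrow> dlen n v u = n - dlen n u v"
  by (simp add: dlen_alt split: if_splits; arith?)

lemma dlen_inj: "u < n \<Longrightarrow> v < n \<Longrightarrow> w < n \<Longrightarrow> dlen n u v = dlen n u w \<Longrightarrow> v = w"
  by (simp add: dlen_alt split: if_splits; arith?)

lemma dlen_split: "u < n \<Longrightarrow> v < n \<Longrightarrow> w < n \<Longrightarrow> u \<noteq> v \<Longrightarrow> dlen n u v < dlen n u w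
   \<Longrightarrow> dlen n u w = dlen n u v + dlen n v w"
  by (simp add: dlen_alt split: if_splits; arith?)

lemma dlen_shift: "v < n \<Longrightarrow> j < n \<Longrightarrow> dlen n v ((v + j) mod n) = j"
proof -
  assume a: "v < n" "j < n"
  have m: "(v + j) mod n = (if v + j < n then v + j else v + j - n)"
    using a by (simp add: mod_if le_mod_geq)
  have "(v + j) mod n < n" using a by simp
  then show ?thesis using a m by (simp add: dlen_alt split: if_splits; arith?)
qed

lemma dlen_shift2: "v < n \<Longrightarrow> j < n \<Longrightarrow> dlen n ((v + n - j) mod n) v = j"
proof -
  assume a: "v < n" "j < n"
  have m: "(v + n - j) mod n = (if v + n - j < n then v + n - j else v - j)"
    using a by (simp add: mod_if le_mod_geq)
  have "(v + n - j) mod n < n" using a by simp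
  then show ?thesis using a m by (simp add: dlen_alt split: if_splits; arith?)
qed

lemma finite_dl: "finite {dlen n u v |u v. P u v}" if "n > 0" "\<And>u v. P u v \<Longrightarrow> u < n \<and> v < n"
proof -
  have "{dlen n u v |u v. P u v} \<subseteq> {..<n}" using that dlen_lt by blast
  then show ?thesis using finite_subset by blast
qed

lemma alpha_le:
  assumes "n > 0" "alpha n E = enat al" "nonedge n E u w"
  shows "al \<le> dlen n u w"
proof -
  have ex: "\<exists>u v. nonedge n E u v" using assms by blast
  have fin: "finite {dlen n u v |u v. nonedge n E u v}"
    by (rule finite_dl) (use assms in \<open>auto simp: nonedge_def\<close>)
  have "al = Min {dlen n u v |u v. nonedge n E u v}" using assms ex unfolding alpha_def by auto
  then show ?thesis using fin assms(3) by (auto intro!: Min_le)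
qed

lemma alpha_att:
  assumes "n > 0" "alpha n E = enat al"
  shows "\<exists>u w. nonedge n E u w \<and> dlen n u w = al"
proof -
  have ex: "\<exists>u v. nonedge n E u v" using assms unfolding alpha_def by (auto split: if_splits)
  have fin: "finite {dlen n u v |u v. nonedge n E u v}"
    by (rule finite_dl) (use assms in \<open>auto simp: nonedge_def\<close>)
  have "al = Min {dlen n u v |u v. nonedge n E u v}" using assms ex unfolding alpha_def by auto
  moreover have "Min {dlen n u v |u v. nonedge n E u v} \<in> {dlen n u v |u v. nonedge n E u v}"
    using fin ex by (intro Min_in) auto
  then obtain u w where "Min {dlen n u v |u v. nonedge n E u v} = dlen n u w" "nonedge n E u w" by blast
  ultimately show ?thesis by auto
qed

lemma beta_ge:
  assumes "n > 0" "is_digraph n E" "E u w"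
  shows "dlen n u w \<le> beta n E"
proof -
  have fin: "finite {dlen n u v |u v. E u v}"
    by (rule finite_dl) (use assms in \<open>auto simp: is_digraph_def\<close>)
  then show ?thesis using assms unfolding beta_def by (auto intro!: Max_ge)
qed

lemma beta_att:
  assumes "n > 0" "is_digraph n E" "E p q"
  shows "\<exists>x y. E x y \<and> dlen n x y = beta n E"
proof -
  have fin: "finite {dlen n u v |u v. E u v}"
    by (rule finite_dl) (use assms in \<open>auto simp: is_digraph_def\<close>)
  have "Max {dlen n u v |u v. E u v} \<in> {dlen n u v |u v. E u v}"
    using fin assms by (intro Max_in) auto
  moreover have "beta n E = Max {dlen n u v |u v. E u v}" using assms unfolding beta_def by auto
  moreover obtain x y where "Max {dlen n u v |u v. E u v} = dlen n x y" "E x y" using calculation(1) by blast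
  ultimately show ?thesis by auto
qed

definition T3 :: "nat \<Rightarrow> (nat \<Rightarrow> nat \<Rightarrow> bool) \<Rightarrow> (nat \<times> nat \<times> nat) set" where
  "T3 n E = {(a,b,c). a < n \<and> b < n \<and> c < n \<and> a \<noteq> b \<and> b \<noteq> c \<and> a \<noteq> c \<and>
      E a b \<and> E b c \<and> \<not> E a c \<and> \<not> E c a}"

lemma P3_T3: "P3 n E = card (T3 n E)" unfolding P3_def T3_def by simp

lemma T3_fin: "finite (T3 n E)"
proof -
  have "T3 n E \<subseteq> {..<n} \<times> {..<n} \<times> {..<n}" unfolding T3_def by auto
  then show ?thesis by (rule finite_subset) auto
qed

lemma P3_pos: assumes "n \<ge> 3" shows "\<exists>E. admissible n E \<and> P3 n E \<ge> 1"
proof -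
  define E0 where "E0 = (\<lambda>(u::nat) (v::nat). (u = 0 \<and> v = 1) \<or> (u = 1 \<and> v = 2))"
  have d: "is_digraph n E0" using assms unfolding is_digraph_def E0_def by auto
  have t: "two_free n E0" unfolding two_free_def E0_def by auto
  have "\<forall>u<n. \<forall>v<n. \<forall>w<n. u \<noteq> v \<and> v \<noteq> w \<and> u \<noteq> w \<and> dlen n u v < dlen n u w \<and> E0 u w
        \<longrightarrow> E0 u v \<and> E0 v w"
  proof (intro allI impI)
    fix u v w assume h: "u < n" "v < n" "w < n"
      "u \<noteq> v \<and> v \<noteq> w \<and> u \<noteq> w \<and> dlen n u v < dlen n u w \<and> E0 u w"
    then have "dlen n u w = 1" using assms unfolding E0_def by (auto simp: dlen_alt)
    moreover have "dlen n u v \<ge> 1" using h dlen_pos by auto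
    ultimately show "E0 u v \<and> E0 v w" using h by auto
  qed
  then have c: "circ_interval n E0" using d unfolding circ_interval_def by blast
  have "(0,1,2) \<in> T3 n E0" using assms unfolding T3_def E0_def by auto
  then have "card (T3 n E0) \<ge> 1" using T3_fin
    by (metis One_nat_def Suc_leI card_gt_0_iff empty_iff)
  then show ?thesis using d t c unfolding admissible_def P3_T3 by blast
qed

lemma circ_use: "circ_interval n E \<Longrightarrow> u < n \<Longrightarrow> v < n \<Longrightarrow> w < n \<Longrightarrow> u \<noteq> v \<Longrightarrow> v \<noteq> w
  \<Longrightarrow> u \<noteq> w \<Longrightarrow> dlen n u v < dlen n u w \<Longrightarrow> E u w \<Longrightarrow> E u v \<and> E v w"
  unfolding circ_interval_def by blast

lemma key:
  assumes n4: "n \<ge> 4" and opt: "optimal n E" and al: "alpha n E = enat al"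
    and Epq: "E p q" and big: "n < dlen n p q + al"
  shows False
proof -
  have n0: "n > 0" using n4 by simp
  have dig: "is_digraph n E" and tf: "two_free n E" and ci: "circ_interval n E"
    using opt unfolding optimal_def admissible_def by auto
  obtain x y where Exy: "E x y" and Lb: "dlen n x y = beta n E"
    using beta_att[OF n0 dig Epq] by blast
  define L where "L = dlen n x y"
  have maxE: "\<And>u w. E u w \<Longrightarrow> dlen n u w \<le> L"
    using beta_ge[OF n0 dig] Lb L_def by auto
  have xn: "x < n" "y < n" "x \<noteq> y" using Exy dig unfolding is_digraph_def by auto
  have Lpq: "dlen n p q \<le> L" using maxE Epq .
  obtain u0 w0 where ne0: "nonedge n E u0 w0" "dlen n u0 w0 = al" using alpha_att[OF n0 al] by blast
  have "nonedge n E w0 u0" using ne0 unfolding nonedge_def by auto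
  then have "al \<le> dlen n w0 u0" using alpha_le[OF n0 al] by blast
  moreover have "dlen n w0 u0 = n - al" using ne0 dlen_rev[of u0 n w0] unfolding nonedge_def by auto
  ultimately have al2: "2 * al \<le> n" using ne0 dlen_lt[of u0 n w0] unfolding nonedge_def by auto
  have L2: "L \<ge> 2" using big Lpq al2 n4 by linarith
  have Ln: "L < n" using dlen_lt xn L_def by auto
  define E' where "E' = (\<lambda>u w. E u w \<and> \<not> (u = x \<and> w = y))"
  have dig': "is_digraph n E'" using dig unfolding is_digraph_def E'_def by auto
  have tf': "two_free n E'" using tf unfolding two_free_def E'_def by auto
  have "\<forall>u<n. \<forall>v<n. \<forall>w<n. u \<noteq> v \<and> v \<noteq> w \<and> u \<noteq> w \<and> dlen n u v < dlen n u w \<and> E' u w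
        \<longrightarrow> E' u v \<and> E' v w"
  proof (intro allI impI)
    fix u v w assume h: "u < n" "v < n" "w < n"
      "u \<noteq> v \<and> v \<noteq> w \<and> u \<noteq> w \<and> dlen n u v < dlen n u w \<and> E' u w"
    then have Euw: "E u w" unfolding E'_def by auto
    have "E u v \<and> E v w" using circ_use[OF ci, of u v w] h Euw by blast
    moreover have "\<not> (u = x \<and> v = y)"
    proof
      assume "u = x \<and> v = y"
      then have "dlen n u w > L" using h L_def by auto
      then show False using maxE Euw by fastforce
    qed
    moreover have "\<not> (v = x \<and> w = y)"
    proof
      assume "v = x \<and> w = y"
      have "dlen n u w = dlen n u v + dlen n v w" using dlen_split h by blast
      moreover have "dlen n u v \<ge> 1" using dlen_pos h by blast
      ultimately have "dlen n u w > L" using \<open>v = x \<and> w = y\<close> L_def by auto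
      then show False using maxE Euw by fastforce
    qed
    ultimately show "E' u v \<and> E' v w" unfolding E'_def by auto
  qed
  then have ci': "circ_interval n E'" using dig' unfolding circ_interval_def by blast
  have adm': "admissible n E'" using dig' tf' ci' unfolding admissible_def by auto
  have sub: "T3 n E \<subseteq> T3 n E'"
  proof
    fix t assume "t \<in> T3 n E"
    then obtain a b c where t: "t = (a,b,c)" and tt: "a < n" "b < n" "c < n" "a \<noteq> b" "b \<noteq> c" "a \<noteq> c"
      "E a b" "E b c" "\<not> E a c" "\<not> E c a" unfolding T3_def by auto
    have ab: "\<not> (a = x \<and> b = y)"
    proof
      assume h: "a = x \<and> b = y"
      have "\<not> dlen n x c < dlen n x y"
      proof
        assume "dlen n x c < dlen n x y"
        then have "E x c" using circ_use[OF ci, of x c y] h tt Exy by blast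
        then show False using tt h by auto
      qed
      moreover have "dlen n x c \<noteq> dlen n x y" using dlen_inj[of x n c y] tt h by auto
      ultimately have g: "dlen n x c > L" using L_def by auto
      have "nonedge n E c x" using tt h unfolding nonedge_def by auto
      then have "al \<le> dlen n c x" using alpha_le[OF n0 al] by blast
      moreover have "dlen n c x = n - dlen n x c" using dlen_rev[of x n c] tt h by auto
      moreover have "dlen n x c < n" using dlen_lt[of x n c] tt h by auto
      ultimately show False using g big Lpq by linarith
    qed
    have bc: "\<not> (b = x \<and> c = y)"
    proof
      assume h: "b = x \<and> c = y"
      have "\<not> dlen n x a < dlen n x y"
      proof
        assume "dlen n x a < dlen n x y"
        then have "E x a" using circ_use[OF ci, of x a y] h tt Exy by blast
        then show False using tt h tf unfolding two_free_def by auto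
      qed
      moreover have "dlen n x a \<noteq> dlen n x y" using dlen_inj[of x n a y] tt h by auto
      ultimately have g: "dlen n x a > L" using L_def by auto
      have sp: "dlen n x a = dlen n x y + dlen n y a" using dlen_split[of x n y a] tt h xn g L_def by auto
      have "nonedge n E y a" using tt h unfolding nonedge_def by auto
      then have "al \<le> dlen n y a" using alpha_le[OF n0 al] by blast
      moreover have "dlen n x a < n" using dlen_lt tt h by auto
      ultimately show False using sp g big Lpq L_def by linarith
    qed
    show "t \<in> T3 n E'" using t tt ab bc unfolding T3_def E'_def by auto
  qed
  define b where "b = (x + 1) mod n"
  have bn: "b < n" using n0 b_def by simp
  have db: "dlen n x b = 1" using dlen_shift[of x n 1] xn n4 b_def by auto
  have bx: "b \<noteq> x" using db dlen_alt[of x n x] xn by auto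
  have nby: "b \<noteq> y" using db L2 L_def by auto
  have "E x b \<and> E b y" using circ_use[OF ci, of x b y] xn bn bx nby db L2 L_def Exy by auto
  moreover have "\<not> E y x" using tf Exy unfolding two_free_def by auto
  ultimately have "(x,b,y) \<in> T3 n E'" using xn bn bx nby unfolding T3_def E'_def by auto
  moreover have "(x,b,y) \<notin> T3 n E" using Exy unfolding T3_def by auto
  ultimately have "T3 n E \<subset> T3 n E'" using sub by blast
  then have "card (T3 n E) < card (T3 n E')" using T3_fin by (rule psubset_card_mono[rotated])
  moreover have "P3 n E' \<le> P3 n E" using opt adm' unfolding optimal_def by auto
  ultimately show False unfolding P3_T3 by simp
qed

lemma dlen_self: "dlen n v v = 0" unfolding dlen_def by simp

lemma dlen_inj2: "u < n \<Longrightarrow> v < n \<Longrightarrow> w < n \<Longrightarrow> dlen n v u = dlen n w u \<Longrightarrow> v = w"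
  by (simp add: dlen_alt split: if_splits; arith?)

lemma dlen_between: "a < n \<Longrightarrow> b < n \<Longrightarrow> c < n \<Longrightarrow> a \<noteq> b \<Longrightarrow> b \<noteq> c \<Longrightarrow> a \<noteq> c
  \<Longrightarrow> dlen n b c < dlen n a c \<Longrightarrow> dlen n a b < dlen n a c"
  by (simp add: dlen_alt split: if_splits; arith?)

lemma al_half: assumes "n > 0" "alpha n E = enat al" shows "2 * al \<le> n"
proof -
  obtain u0 w0 where ne0: "nonedge n E u0 w0" "dlen n u0 w0 = al" using alpha_att[OF assms] by blast
  have "nonedge n E w0 u0" using ne0 unfolding nonedge_def by auto
  then have "al \<le> dlen n w0 u0" using alpha_le[OF assms] by blast
  moreover have "dlen n w0 u0 = n - al" using ne0 dlen_rev[of u0 n w0] unfolding nonedge_def by auto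
  ultimately show ?thesis using ne0 dlen_lt[of u0 n w0] unfolding nonedge_def by auto
qed

lemma enat_le_aux: "al \<le> k + 1 \<Longrightarrow> enat al - 1 \<le> enat k"
  by (simp add: one_enat_def)

theorem mainTheorem5:
  fixes n :: nat and E :: "nat \<Rightarrow> nat \<Rightarrow> bool"
  assumes "n \<ge> 4" and "optimal n E"
  shows "alpha n E \<noteq> \<infinity> \<and>
    (\<forall>v<n. alpha n E - 1 \<le> enat (outdeg n E v) \<and> outdeg n E v \<le> beta n E \<and>
            alpha n E - 1 \<le> enat (indeg n E v) \<and> indeg n E v \<le> beta n E)"
proof -
  have n0: "n > 0" using assms by simp
  have dig: "is_digraph n E" and tf: "two_free n E" and ci: "circ_interval n E"
    using assms(2) unfolding optimal_def admissible_def by auto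
  obtain E1 where "admissible n E1" "P3 n E1 \<ge> 1" using P3_pos[of n] assms(1) by auto
  then have "P3 n E \<ge> 1" using assms(2) unfolding optimal_def by fastforce
  then have "T3 n E \<noteq> {}" unfolding P3_T3 by auto
  then obtain a b c where "(a,b,c) \<in> T3 n E" by auto
  then have "nonedge n E a c" unfolding T3_def nonedge_def by auto
  then have ex: "\<exists>u v. nonedge n E u v" by blast
  define al where "al = Min {dlen n u v |u v. nonedge n E u v}"
  have al: "alpha n E = enat al" unfolding alpha_def al_def using ex by simp
  have half: "2 * al \<le> n" using al_half[OF n0 al] .
  have "\<forall>v<n. alpha n E - 1 \<le> enat (outdeg n E v) \<and> outdeg n E v \<le> beta n E \<and>
            alpha n E - 1 \<le> enat (indeg n E v) \<and> indeg n E v \<le> beta n E"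
  proof (intro allI impI conjI)
    fix v assume vn: "v < n"
    have finB: "finite {1..beta n E}" by simp
    show "outdeg n E v \<le> beta n E"
    proof -
      have "inj_on (dlen n v) {u. u < n \<and> E v u}"
        by (rule inj_onI) (use dlen_inj vn in blast)
      moreover have "dlen n v ` {u. u < n \<and> E v u} \<subseteq> {1..beta n E}"
      proof
        fix d assume "d \<in> dlen n v ` {u. u < n \<and> E v u}"
        then obtain u where u: "u < n" "E v u" "d = dlen n v u" by auto
        have "v \<noteq> u" using u dig unfolding is_digraph_def by blast
        then show "d \<in> {1..beta n E}" using beta_ge[OF n0 dig u(2)] dlen_pos[OF vn u(1)] u(3) by simp
      qed
      ultimately have "card {u. u < n \<and> E v u} \<le> card {1..beta n E}"
        using finB by (intro card_inj_on_le) auto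
      then show ?thesis unfolding outdeg_def by simp
    qed
    show "indeg n E v \<le> beta n E"
    proof -
      have "inj_on (\<lambda>u. dlen n u v) {u. u < n \<and> E u v}"
        by (rule inj_onI) (use dlen_inj2 vn in blast)
      moreover have "(\<lambda>u. dlen n u v) ` {u. u < n \<and> E u v} \<subseteq> {1..beta n E}"
      proof
        fix d assume "d \<in> (\<lambda>u. dlen n u v) ` {u. u < n \<and> E u v}"
        then obtain u where u: "u < n" "E u v" "d = dlen n u v" by auto
        have "u \<noteq> v" using u dig unfolding is_digraph_def by blast
        then show "d \<in> {1..beta n E}" using beta_ge[OF n0 dig u(2)] dlen_pos[OF u(1) vn] u(3) by simp
      qed
      ultimately have "card {u. u < n \<and> E u v} \<le> card {1..beta n E}"
        using finB by (intro card_inj_on_le) auto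
      then show ?thesis unfolding indeg_def by simp
    qed
    show "alpha n E - 1 \<le> enat (outdeg n E v)"
    proof -
      define k where "k = outdeg n E v"
      have "al \<le> k + 1"
      proof (rule ccontr)
        assume "\<not> al \<le> k + 1"
        then have kal: "k + 2 \<le> al" by simp
        have kn: "k + 1 < n" using kal half by simp
        define w where "w = (v + (k+1)) mod n"
        have wn: "w < n" using n0 w_def by simp
        have dw: "dlen n v w = k + 1" using dlen_shift[OF vn kn] w_def by simp
        have vw: "v \<noteq> w" using dw by (auto simp: dlen_self)
        have nE: "\<not> E v w"
        proof
          assume Evw: "E v w"
          define S where "S = (\<lambda>j. (v + j) mod n) ` {1..k+1}"
          have "S \<subseteq> {u. u < n \<and> E v u}"
          proof
            fix u assume "u \<in> S"
            then obtain j where j: "j \<in> {1..k+1}" "u = (v + j) mod n" unfolding S_def by auto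
            have un: "u < n" using j n0 by simp
            have du: "dlen n v u = j" using dlen_shift[OF vn, of j] j kn by simp
            show "u \<in> {u. u < n \<and> E v u}"
            proof (cases "j = k + 1")
              case True then show ?thesis using Evw j w_def un by simp
            next
              case False
              have "u \<noteq> v" using du j by (auto simp: dlen_self)
              moreover have "u \<noteq> w" using du dw False by auto
              moreover have "dlen n v u < dlen n v w" using du dw j False by auto
              ultimately have "E v u" using circ_use[OF ci vn un wn] vw Evw by blast
              then show ?thesis using un by simp
            qed
          qed
          moreover have "card S = k + 1"
          proof -
            have "inj_on (\<lambda>j. (v + j) mod n) {1..k+1}"
            proof (rule inj_onI)
              fix i j assume ij: "i \<in> {1..k+1}" "j \<in> {1..k+1}" and eq: "(v + i) mod n = (v + j) mod n"
              have "i = dlen n v ((v + i) mod n)" using dlen_shift[OF vn, of i] kn ij by simp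
              also have "\<dots> = dlen n v ((v + j) mod n)" using eq by simp
              also have "\<dots> = j" using dlen_shift[OF vn, of j] kn ij by simp
              finally show "i = j" .
            qed
            then show ?thesis unfolding S_def by (simp add: card_image)
          qed
          moreover have "card S \<le> card {u. u < n \<and> E v u}"
            by (rule card_mono) (auto simp: \<open>S \<subseteq> {u. u < n \<and> E v u}\<close>)
          ultimately have "k + 1 \<le> card {u. u < n \<and> E v u}" by simp
          then show False unfolding k_def outdeg_def by simp
        qed
        have Ewv: "E w v"
        proof (rule ccontr)
          assume "\<not> E w v"
          then have "nonedge n E v w" using nE vn wn vw unfolding nonedge_def by auto
          then have "al \<le> dlen n v w" using alpha_le[OF n0 al] by blast
          then show False using dw kal by simp
        qed
        have "dlen n w v = n - (k+1)" using dlen_rev[of v n w] vn wn vw dw by simp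
        then show False using key[OF assms(1) assms(2) al Ewv] kal kn by linarith
      qed
      then show ?thesis using al k_def enat_le_aux by simp
    qed
    show "alpha n E - 1 \<le> enat (indeg n E v)"
    proof -
      define k where "k = indeg n E v"
      have "al \<le> k + 1"
      proof (rule ccontr)
        assume "\<not> al \<le> k + 1"
        then have kal: "k + 2 \<le> al" by simp
        have kn: "k + 1 < n" using kal half by simp
        define w where "w = (v + n - (k+1)) mod n"
        have wn: "w < n" using n0 w_def by simp
        have dw: "dlen n w v = k + 1" using dlen_shift2[OF vn kn] w_def by simp
        have vw: "v \<noteq> w" using dw by (auto simp: dlen_self)
        have nE: "\<not> E w v"
        proof
          assume Ewv: "E w v"
          define S where "S = (\<lambda>j. (v + n - j) mod n) ` {1..k+1}"
          have "S \<subseteq> {u. u < n \<and> E u v}"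
          proof
            fix u assume "u \<in> S"
            then obtain j where j: "j \<in> {1..k+1}" "u = (v + n - j) mod n" unfolding S_def by auto
            have un: "u < n" using j n0 by simp
            have du: "dlen n u v = j" using dlen_shift2[OF vn, of j] j kn by simp
            show "u \<in> {u. u < n \<and> E u v}"
            proof (cases "j = k + 1")
              case True then show ?thesis using Ewv j w_def un by simp
            next
              case False
              have uv: "u \<noteq> v" using du j by (auto simp: dlen_self)
              moreover have uw: "u \<noteq> w" using du dw False by auto
              moreover have "dlen n u v < dlen n w v" using du dw j False by auto
              ultimately have "dlen n w u < dlen n w v" using dlen_between[OF wn un vn] vw by blast
              then have "E u v" using circ_use[OF ci wn un vn] vw uv uw Ewv by blast
              then show ?thesis using un by simp
            qed
          qed
          moreover have "card S = k + 1"
          proof -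
            have "inj_on (\<lambda>j. (v + n - j) mod n) {1..k+1}"
            proof (rule inj_onI)
              fix i j assume ij: "i \<in> {1..k+1}" "j \<in> {1..k+1}" and eq: "(v + n - i) mod n = (v + n - j) mod n"
              have "i = dlen n ((v + n - i) mod n) v" using dlen_shift2[OF vn, of i] kn ij by simp
              also have "\<dots> = dlen n ((v + n - j) mod n) v" using eq by simp
              also have "\<dots> = j" using dlen_shift2[OF vn, of j] kn ij by simp
              finally show "i = j" .
            qed
            then show ?thesis unfolding S_def by (simp add: card_image)
          qed
          moreover have "card S \<le> card {u. u < n \<and> E u v}"
            by (rule card_mono) (auto simp: \<open>S \<subseteq> {u. u < n \<and> E u v}\<close>)
          ultimately have "k + 1 \<le> card {u. u < n \<and> E u v}" by simp
          then show False unfolding k_def indeg_def by simp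
        qed
        have Evw: "E v w"
        proof (rule ccontr)
          assume "\<not> E v w"
          then have "nonedge n E w v" using nE vn wn vw unfolding nonedge_def by auto
          then have "al \<le> dlen n w v" using alpha_le[OF n0 al] by blast
          then show False using dw kal by simp
        qed
        have "dlen n v w = n - (k+1)" using dlen_rev[of w n v] vn wn vw dw by simp
        then show False using key[OF assms(1) assms(2) al Evw] kal kn by linarith
      qed
      then show ?thesis using al k_def enat_le_aux by simp
    qed
  qed
  then show ?thesis using al by simp
qed

end
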